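(* Let $0<q<1$, $n,m\in\mathbb{N}_0$, and let $x,y$ be complex with $y\neq0$. Then $${}_2\Phi_1\left[\begin{matrix}q^{-n},x;\\ y;\end{matrix}\;q;\,q^{1+m}\right]=\frac{x^n\left(\frac{y}{x};q\right)_n}{(y;q)_n}\sum_{j=0}^m\begin{bmatrix}m\\ j\end{bmatrix}_q\frac{\left(\frac{q^{1-n}}{y},\frac{qx}{y};q\right)_{m-j}}{\left(\frac{xq^{1-n}}{y};q\right)_{m-j}}\left(\frac{q}{y}\right)^j.$$
   Context: Throughout $0<q<1$. For complex $\alpha$: $(\alpha;q)_0=1$, $(\alpha;q)_n=\prod_{k=0}^{n-1}(1-\alpha q^k)$, $(\alpha_1,\dots,\alpha_m;q)_n=(\alpha_1;q)_n\cdots(\alpha_m;q)_n$. The $q$-binomial coefficient is $\begin{bmatrix}m\\ j\end{bmatrix}_q=\frac{(q;q)_m}{(q;q)_j(q;q)_{m-j}}$. Also ${}_2\Phi_1\left[\begin{matrix}a_1,a_2;\\ b_1;\end{matrix}\,q;z\right]=\sum_{k=0}^\infty\frac{(a_1,a_2;q)_k}{(b_1;q)_k}\frac{z^k}{(q;q)_k}$ (terminating when $a_1=q^{-n}$). *)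

theory Defs
  imports Complex_Main
begin

definition qpoch :: "complex \<Rightarrow> complex \<Rightarrow> nat \<Rightarrow> complex" where
  "qpoch a q n = (\<Prod>k<n. 1 - a * q ^ k)"

definition qbinom :: "complex \<Rightarrow> nat \<Rightarrow> nat \<Rightarrow> complex" where
  "qbinom q m j = qpoch q q m / (qpoch q q j * qpoch q q (m - j))"

definition phi21 :: "complex \<Rightarrow> complex \<Rightarrow> complex \<Rightarrow> complex \<Rightarrow> complex \<Rightarrow> complex" where
  "phi21 a1 a2 b1 q z =
     (\<Sum>k. qpoch a1 q k * qpoch a2 q k / qpoch b1 q k * z ^ k / qpoch q q k)"

end

theory Submission
  imports Defs
begin

lemma qpoch_Suc: "qpoch a Q (Suc r) = (1 - a) * qpoch (a*Q) Q r"
  unfolding qpoch_def by (subst prod.lessThan_Suc_shift) (simp add: mult.assoc)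

lemma qpoch_Suc2: "qpoch a Q (Suc r) = qpoch a Q r * (1 - a * Q^r)"
  unfolding qpoch_def by simp

lemma qpoch_add: "qpoch a Q (r+s) = qpoch a Q r * qpoch (a*Q^r) Q s"
  by (induction s) (simp_all add: qpoch_Suc2 qpoch_def power_add mult_ac)

lemma qpoch_0[simp]: "qpoch a Q 0 = 1" by (simp add: qpoch_def)

lemma qpoch_vanish:
  assumes "(Q::complex) \<noteq> 0" "n < k"
  shows "qpoch (inverse (Q^n)) Q k = 0"
  unfolding qpoch_def using assms by (intro prod_zero) (auto intro!: bexI[of _ n])

definition alpha :: "complex \<Rightarrow> nat \<Rightarrow> nat \<Rightarrow> complex" where
  "alpha Q n k = qpoch (inverse (Q^n)) Q k * Q^k / qpoch Q Q k"

lemma alpha_0[simp]: "alpha Q n 0 = 1" by (simp add: alpha_def)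

lemma alpha_vanish: "(Q::complex) \<noteq> 0 \<Longrightarrow> n < k \<Longrightarrow> alpha Q n k = 0"
  by (simp add: alpha_def qpoch_vanish)

lemma alpha_rec:
  assumes Q: "(Q::complex) \<noteq> 0" and nz: "\<And>k. qpoch Q Q k \<noteq> 0"
  shows "alpha Q (Suc n) (Suc j) = alpha Q n (Suc j) / Q^(Suc j) - alpha Q n j / Q^j"
proof -
  have e: "inverse (Q^Suc n) * Q = inverse (Q^n)" using Q by (simp add: field_simps)
  have n1: "qpoch Q Q j \<noteq> 0" "1 - Q * Q^j \<noteq> 0" using nz[of j] nz[of "Suc j"]
    by (auto simp: qpoch_Suc2)
  show ?thesis unfolding alpha_def qpoch_Suc[of "inverse (Q^Suc n)"] e
    qpoch_Suc2[of "inverse (Q^n)"] qpoch_Suc2[of Q Q j]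
    using Q n1 by (simp add: field_simps)
qed


lemma CV:
  assumes Q: "(Q::complex) \<noteq> 0" and nz: "\<And>k. qpoch Q Q k \<noteq> 0"
  shows "(\<Sum>k\<le>n. alpha Q n k * qpoch b Q k * qpoch (c*Q^k) Q (n-k)) = (\<Prod>i<n. b - c*Q^i)"
proof (induction n arbitrary: c)
  case 0
  then show ?case by simp
next
  case (Suc n)
  define w where "w k = qpoch b Q k * qpoch (c*Q^k) Q (Suc n - k)" for k
  define v where "v k = qpoch b Q k * qpoch (c*Q*Q^k) Q (n - k)" for k
  define a where "a k = alpha Q n k / Q^k" for k
  have key: "(b - c) * v k = (w k - w (Suc k)) / Q^k" if "k \<le> n" for k
  proof -
    have e1: "Suc n - k = Suc (n - k)" using that by simp
    have e2: "n - k = Suc n - Suc k" by simp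
    have "w k = qpoch b Q k * ((1 - c*Q^k) * qpoch (c*Q*Q^k) Q (n-k))"
      unfolding w_def e1 qpoch_Suc by (simp add: mult_ac)
    moreover have "w (Suc k) = qpoch b Q k * (1 - b*Q^k) * qpoch (c*Q*Q^k) Q (n-k)"
      unfolding w_def qpoch_Suc2 e2[symmetric] by (simp add: mult_ac)
    ultimately show ?thesis unfolding v_def using Q by (simp add: field_simps)
  qed
  have "(\<Prod>i<Suc n. b - c*Q^i) = (b - c) * (\<Prod>i<n. b - (c*Q)*Q^i)"
    by (subst prod.lessThan_Suc_shift) (simp add: mult_ac)
  also have "\<dots> = (b - c) * (\<Sum>k\<le>n. alpha Q n k * v k)"
    unfolding Suc.IH[of "c*Q", symmetric] v_def by (simp add: mult_ac)
  also have "\<dots> = (\<Sum>k\<le>n. alpha Q n k * ((b - c) * v k))"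
    by (simp add: sum_distrib_left mult_ac)
  also have "\<dots> = (\<Sum>k\<le>n. a k * w k - a k * w (Suc k))"
  proof (intro sum.cong refl)
    fix k assume "k \<in> {..n}"
    then have kk: "(b - c) * v k = (w k - w (Suc k)) / Q^k" using key by simp
    show "alpha Q n k * ((b - c) * v k) = a k * w k - a k * w (Suc k)"
      unfolding kk a_def using Q by (simp add: field_simps)
  qed
  also have "\<dots> = (\<Sum>k\<le>n. a k * w k) - (\<Sum>k\<le>n. a k * w (Suc k))"
    by (simp add: sum_subtractf)
  also have "(\<Sum>k\<le>n. a k * w k) = (\<Sum>k\<le>Suc n. a k * w k)"
    using alpha_vanish[OF Q, of n "Suc n"] by (simp add: a_def)
  also have "\<dots> = w 0 + (\<Sum>k\<le>n. a (Suc k) * w (Suc k))"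
    by (subst sum.atMost_Suc_shift) (simp add: a_def)
  finally have *: "(\<Prod>i<Suc n. b - c*Q^i) = w 0 + (\<Sum>k\<le>n. (a (Suc k) - a k) * w (Suc k))"
    by (simp add: sum_subtractf algebra_simps)
  have "(\<Sum>k\<le>Suc n. alpha Q (Suc n) k * qpoch b Q k * qpoch (c*Q^k) Q (Suc n-k))
      = (\<Sum>k\<le>Suc n. alpha Q (Suc n) k * w k)"
    by (simp add: w_def mult_ac)
  also have "\<dots> = w 0 + (\<Sum>k\<le>n. alpha Q (Suc n) (Suc k) * w (Suc k))"
    by (subst sum.atMost_Suc_shift) simp
  also have "\<dots> = w 0 + (\<Sum>k\<le>n. (a (Suc k) - a k) * w (Suc k))"
    by (simp add: alpha_rec[OF Q nz] a_def)
  finally show ?case using * by simp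
qed


definition G :: "complex \<Rightarrow> nat \<Rightarrow> nat \<Rightarrow> complex" where
  "G Q m j = (if j \<le> m then qbinom Q m j else 0)"

lemma G_0[simp]: "qpoch Q Q m \<noteq> 0 \<Longrightarrow> G Q m 0 = 1"
  by (simp add: G_def qbinom_def)

lemma G_pascal:
  assumes nz: "\<And>k. qpoch Q Q k \<noteq> 0"
  shows "G Q (Suc m) (Suc l) = G Q m (Suc l) + Q^(m - l) * G Q m l"
proof (cases "Suc l \<le> m")
  case True
  then obtain d where d: "m = Suc l + d" using le_Suc_ex by blast
  have e1: "Suc m - Suc l = Suc d" "m - Suc l = d" "m - l = Suc d" using d by auto
  have a1: "qpoch Q Q (Suc m) = qpoch Q Q m * (1 - Q*Q^m)" by (simp add: qpoch_Suc2)
  have a2: "qpoch Q Q (Suc l) = qpoch Q Q l * (1 - Q*Q^l)" by (simp add: qpoch_Suc2)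
  have a3: "qpoch Q Q (Suc d) = qpoch Q Q d * (1 - Q*Q^d)" by (simp add: qpoch_Suc2)
  have n: "qpoch Q Q l \<noteq> 0" "qpoch Q Q d \<noteq> 0" "1 - Q*Q^l \<noteq> 0" "1 - Q*Q^d \<noteq> 0"
    using nz[of l] nz[of d] nz[of "Suc l"] nz[of "Suc d"] by (auto simp: qpoch_Suc2)
  have qm: "Q^m = Q^d * Q^l * Q" using d by (simp add: power_add mult_ac)
  have alg: "\<And>A L D a b::complex. L \<noteq> 0 \<Longrightarrow> D \<noteq> 0 \<Longrightarrow> 1 - Q*a \<noteq> 0 \<Longrightarrow> 1 - Q*b \<noteq> 0 \<Longrightarrow>
     A * (1 - Q*(b*a*Q)) / (L * (1 - Q*a) * (D * (1 - Q*b))) =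
     A / (L * (1 - Q*a) * D) + Q*b * (A / (L * (D * (1 - Q*b))))"
  proof -
    fix A L D a b :: complex
    assume h: "L \<noteq> 0" "D \<noteq> 0" "1 - Q*a \<noteq> 0" "1 - Q*b \<noteq> 0"
    define u where "u = 1 - Q*a"
    define v where "v = 1 - Q*b"
    have e: "1 - Q*(b*a*Q) = v + Q*b*u" unfolding u_def v_def by (simp add: algebra_simps)
    have "A * (v + Q*b*u) / (L * u * (D * v)) = A / (L * u * D) + Q*b * (A / (L * (D * v)))"
      using h unfolding u_def[symmetric] v_def[symmetric] by (simp add: field_simps)
    then show "A * (1 - Q*(b*a*Q)) / (L * (1 - Q*a) * (D * (1 - Q*b))) =
     A / (L * (1 - Q*a) * D) + Q*b * (A / (L * (D * (1 - Q*b))))"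
      unfolding e u_def v_def .
  qed
  have qml: "Q^(m-l) = Q * Q^d" using e1 by simp
  show ?thesis using True unfolding G_def qbinom_def e1 a1 a2 a3 qml
    using alg[OF n] by (simp add: qm mult_ac)
next
  case False
  then show ?thesis
  proof (cases "l = m")
    case True
    then show ?thesis using nz by (simp add: G_def qbinom_def)
  qed (simp add: G_def)
qed

lemma GR:
  assumes nz: "\<And>k. qpoch Q Q k \<noteq> 0"
  shows "u^m = (\<Sum>j\<le>m. G Q m j * t^j * (\<Prod>i<m-j. u - t*Q^i))"
proof (induction m)
  case 0
  then show ?case using nz by simp
next
  case (Suc m)
  define p where "p r = (\<Prod>i<r. u - t*Q^i)" for r
  have up: "u * p r = p (Suc r) + t * Q^r * p r" for r
    by (simp add: p_def algebra_simps)
  have "u^Suc m = (\<Sum>j\<le>m. G Q m j * t^j * (u * p (m-j)))"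
    using Suc.IH by (simp add: p_def sum_distrib_left mult_ac)
  also have "\<dots> = (\<Sum>j\<le>m. G Q m j * t^j * p (Suc m - j)) +
       (\<Sum>j\<le>m. Q^(m-j) * G Q m j * t^(Suc j) * p (m-j))"
    by (simp add: up Suc_diff_le sum.distrib algebra_simps)
  also have "(\<Sum>j\<le>m. G Q m j * t^j * p (Suc m - j)) = (\<Sum>j\<le>Suc m. G Q m j * t^j * p (Suc m - j))"
    by (simp add: G_def)
  also have "\<dots> = p (Suc m) + (\<Sum>j\<le>m. G Q m (Suc j) * t^(Suc j) * p (m - j))"
    by (subst sum.atMost_Suc_shift) (simp add: nz)
  finally have *: "u^Suc m = p (Suc m) + (\<Sum>j\<le>m. (G Q m (Suc j) + Q^(m-j) * G Q m j) * t^(Suc j) * p (m - j))"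
    by (simp add: sum.distrib algebra_simps)
  have "(\<Sum>j\<le>Suc m. G Q (Suc m) j * t^j * p (Suc m - j)) = p (Suc m) + (\<Sum>j\<le>m. G Q (Suc m) (Suc j) * t^(Suc j) * p (m - j))"
    by (subst sum.atMost_Suc_shift) (simp add: nz)
  also have "\<dots> = u^Suc m" unfolding * by (simp add: G_pascal[OF nz])
  finally show ?case by (simp add: p_def)
qed


lemma LX:
  assumes Q: "(Q::complex) \<noteq> 0" and y: "y \<noteq> 0" and k: "k \<le> n"
  shows "qpoch (y*Q^k) Q (n-k) * (\<Prod>i<M. Q^k - Q/y*Q^i) =
         (\<Prod>i<M. -(Q*Q^i)/y) * qpoch (y/Q^M*Q^k) Q (n-k+M)"
proof (induction M)
  case 0
  then show ?case by simp
next
  case (Suc M)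
  have e: "y/Q^(Suc M)*Q^k*Q = y/Q^M*Q^k" using Q by (simp add: field_simps)
  have s: "qpoch (y/Q^(Suc M)*Q^k) Q (n-k+Suc M) = (1 - y/Q^(Suc M)*Q^k) * qpoch (y/Q^M*Q^k) Q (n-k+M)"
  proof -
    have "n-k+Suc M = Suc (n-k+M)" by simp
    then show ?thesis by (simp only: qpoch_Suc e)
  qed
  have f: "(Q^k - Q/y*Q^M) = -(Q*Q^M)/y * (1 - y/Q^(Suc M)*Q^k)"
    using Q y by (simp add: field_simps)
  have "qpoch (y*Q^k) Q (n-k) * (\<Prod>i<Suc M. Q^k - Q/y*Q^i) =
     (qpoch (y*Q^k) Q (n-k) * (\<Prod>i<M. Q^k - Q/y*Q^i)) * (Q^k - Q/y*Q^M)"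
    by (simp only: prod.lessThan_Suc mult_ac)
  also have "\<dots> = (\<Prod>i<M. -(Q*Q^i)/y) * qpoch (y/Q^M*Q^k) Q (n-k+M) * (-(Q*Q^M)/y * (1 - y/Q^(Suc M)*Q^k))"
    unfolding Suc.IH f ..
  also have "\<dots> = (\<Prod>i<Suc M. -(Q*Q^i)/y) * qpoch (y/Q^Suc M*Q^k) Q (n-k+Suc M)"
    unfolding s by (simp only: prod.lessThan_Suc mult_ac)
  finally show ?case .
qed

lemma LE:
  assumes Q: "(Q::complex) \<noteq> 0" and y: "y \<noteq> 0"
  shows "(\<Prod>i<M. -(Q*Q^i)/y) * qpoch (y/Q^M*Q^n) Q M * (\<Prod>i<n. x - y/Q^M*Q^i) * qpoch (x*(Q/Q^n)/y) Q M
     = (\<Prod>i<n. x - y*Q^i) * qpoch (Q/Q^n/y) Q M * qpoch (Q*x/y) Q M"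
proof (induction M)
  case 0
  then show ?case by simp
next
  case (Suc M)
  define c where "c = y/Q^M"
  define c' where "c' = y/Q^Suc M"
  have cc: "c'*Q = c" unfolding c_def c'_def using Q by (simp add: field_simps)
  define K where "K = (\<Prod>i<M. -(Q*Q^i)/y)"
  define P where "P = qpoch (c*Q^n) Q M"
  define R where "R = (\<Prod>i<n. x - c*Q^i)"
  define R' where "R' = (\<Prod>i<n. x - c'*Q^i)"
  define C where "C = x*(Q/Q^n)/y"
  define A where "A = Q/Q^n/y"
  define B where "B = Q*x/y"
  have IH: "K * P * R * qpoch C Q M = (\<Prod>i<n. x - y*Q^i) * qpoch A Q M * qpoch B Q M"
    using Suc.IH unfolding K_def P_def R_def C_def A_def B_def c_def .
  have p1: "qpoch (c'*Q^n) Q (Suc M) = (1 - c'*Q^n) * P"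
  proof -
    have "c'*Q^n*Q = c*Q^n" using cc by (simp add: mult_ac)
    then show ?thesis unfolding P_def by (simp only: qpoch_Suc)
  qed
  have p2: "R' * (x - c'*Q^n) = (x - c') * R"
  proof -
    have "R' * (x - c'*Q^n) = (\<Prod>i<Suc n. x - c'*Q^i)" unfolding R'_def by simp
    also have "\<dots> = (x - c') * R" unfolding R_def
      by (subst prod.lessThan_Suc_shift) (simp add: cc[symmetric] mult_ac)
    finally show ?thesis .
  qed
  have g: "1 - C*Q^M = -(Q*Q^M)/(y*Q^n) * (x - c'*Q^n)"
    unfolding C_def c'_def using Q y by (simp add: field_simps)
  have sc: "(-(Q*Q^M)/y) * (1 - c'*Q^n) * (-(Q*Q^M)/(y*Q^n)) * (x - c') = (1 - A*Q^M) * (1 - B*Q^M)"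
    unfolding A_def B_def c'_def using Q y by (simp add: field_simps)
  have "(\<Prod>i<Suc M. -(Q*Q^i)/y) * qpoch (c'*Q^n) Q (Suc M) * R' * qpoch C Q (Suc M)
      = K * (-(Q*Q^M)/y) * ((1 - c'*Q^n) * P) * R' * (qpoch C Q M * (-(Q*Q^M)/(y*Q^n) * (x - c'*Q^n)))"
    unfolding p1 qpoch_Suc2[of C] g K_def by simp
  also have "\<dots> = K * P * (R' * (x - c'*Q^n)) * qpoch C Q M * ((-(Q*Q^M)/y) * (1 - c'*Q^n) * (-(Q*Q^M)/(y*Q^n)))"
    by (simp only: mult_ac)
  also have "\<dots> = (K * P * R * qpoch C Q M) * ((-(Q*Q^M)/y) * (1 - c'*Q^n) * (-(Q*Q^M)/(y*Q^n)) * (x - c'))"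
    unfolding p2 by (simp only: mult_ac)
  also have "\<dots> = (\<Prod>i<n. x - y*Q^i) * qpoch A Q (Suc M) * qpoch B Q (Suc M)"
    unfolding IH sc qpoch_Suc2 by (simp only: mult_ac)
  finally show ?case unfolding c'_def R'_def C_def A_def B_def .
qed


lemma xpoch: "(x::complex) \<noteq> 0 \<Longrightarrow> x^n * qpoch (y/x) Q n = (\<Prod>i<n. x - y*Q^i)"
  unfolding qpoch_def by (induction n) (simp_all add: field_simps)

lemma S1:
  assumes Q: "(Q::complex) \<noteq> 0" and nz: "\<And>k. qpoch Q Q k \<noteq> 0"
    and y: "y \<noteq> 0" and x: "x \<noteq> 0" and yn: "qpoch y Q n \<noteq> 0"
    and cM: "qpoch (x*(Q/Q^n)/y) Q M \<noteq> 0"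
  shows "(\<Sum>k\<le>n. alpha Q n k * qpoch x Q k / qpoch y Q k * (\<Prod>i<M. Q^k - Q/y*Q^i)) =
     x^n * qpoch (y/x) Q n / qpoch y Q n *
     (qpoch (Q/Q^n/y) Q M * qpoch (Q*x/y) Q M) / qpoch (x*(Q/Q^n)/y) Q M"
proof -
  define c where "c = y/Q^M"
  define K where "K = (\<Prod>i<M. -(Q*Q^i)/y)"
  have trm: "qpoch y Q n * (alpha Q n k * qpoch x Q k / qpoch y Q k * (\<Prod>i<M. Q^k - Q/y*Q^i))
     = K * qpoch (c*Q^n) Q M * (alpha Q n k * qpoch x Q k * qpoch (c*Q^k) Q (n-k))"
    if k: "k \<le> n" for k
  proof -
    have sp: "qpoch y Q n = qpoch y Q k * qpoch (y*Q^k) Q (n-k)"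
      using qpoch_add[of y Q k "n-k"] k by simp
    have yk: "qpoch y Q k \<noteq> 0" using yn sp by auto
    have e: "c*Q^k*Q^(n-k) = c*Q^n" using k by (simp add: power_add[symmetric])
    have sp2: "qpoch (c*Q^k) Q (n-k+M) = qpoch (c*Q^k) Q (n-k) * qpoch (c*Q^n) Q M"
      using qpoch_add[of "c*Q^k" Q "n-k" M] unfolding e .
    have "qpoch y Q n * (alpha Q n k * qpoch x Q k / qpoch y Q k * (\<Prod>i<M. Q^k - Q/y*Q^i))
       = alpha Q n k * qpoch x Q k * (qpoch (y*Q^k) Q (n-k) * (\<Prod>i<M. Q^k - Q/y*Q^i))"
      unfolding sp using yk by (simp add: field_simps)
    also have "\<dots> = alpha Q n k * qpoch x Q k * (K * qpoch (c*Q^k) Q (n-k+M))"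
      unfolding LX[OF Q y k] K_def c_def ..
    finally show ?thesis unfolding sp2 by (simp only: mult_ac)
  qed
  have "qpoch y Q n * (\<Sum>k\<le>n. alpha Q n k * qpoch x Q k / qpoch y Q k * (\<Prod>i<M. Q^k - Q/y*Q^i))
      = (\<Sum>k\<le>n. K * qpoch (c*Q^n) Q M * (alpha Q n k * qpoch x Q k * qpoch (c*Q^k) Q (n-k)))"
    unfolding sum_distrib_left by (intro sum.cong refl) (rule trm, simp)
  also have "\<dots> = K * qpoch (c*Q^n) Q M * (\<Prod>i<n. x - c*Q^i)"
    unfolding sum_distrib_left[symmetric] CV[OF Q nz] ..
  finally have A: "qpoch y Q n * (\<Sum>k\<le>n. alpha Q n k * qpoch x Q k / qpoch y Q k * (\<Prod>i<M. Q^k - Q/y*Q^i))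
      = K * qpoch (c*Q^n) Q M * (\<Prod>i<n. x - c*Q^i)" .
  have B: "K * qpoch (c*Q^n) Q M * (\<Prod>i<n. x - c*Q^i) * qpoch (x*(Q/Q^n)/y) Q M
     = x^n * qpoch (y/x) Q n * qpoch (Q/Q^n/y) Q M * qpoch (Q*x/y) Q M"
    using LE[OF Q y, of M n x] unfolding K_def c_def xpoch[OF x] .
  define S where "S = (\<Sum>k\<le>n. alpha Q n k * qpoch x Q k / qpoch y Q k * (\<Prod>i<M. Q^k - Q/y*Q^i))"
  define W where "W = x^n * qpoch (y/x) Q n * qpoch (Q/Q^n/y) Q M * qpoch (Q*x/y) Q M"
  have "S * qpoch y Q n * qpoch (x*(Q/Q^n)/y) Q M = W"
    using A B unfolding S_def[symmetric] W_def[symmetric] by (simp only: mult_ac)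
  then have "S = W / (qpoch y Q n * qpoch (x*(Q/Q^n)/y) Q M)"
    using yn cM by (simp add: field_simps)
  then show ?thesis unfolding S_def[symmetric] W_def by (simp add: field_simps)
qed


theorem theorem5:
  fixes q :: real and n m :: nat and x y :: complex
  assumes "0 < q" "q < 1"
    and "y \<noteq> 0" and "x \<noteq> 0"
    and "qpoch y (of_real q) n \<noteq> 0"
    and "\<forall>j\<le>m. qpoch (x * of_real q powi (1 - int n) / y) (of_real q) (m - j) \<noteq> 0"
  shows "phi21 (of_real q powi (- int n)) x y (of_real q) (of_real q ^ (1 + m)) =
    x ^ n * qpoch (y / x) (of_real q) n / qpoch y (of_real q) n *
    (\<Sum>j\<le>m. qbinom (of_real q) m j *
       (qpoch (of_real q powi (1 - int n) / y) (of_real q) (m - j) *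
        qpoch (of_real q * x / y) (of_real q) (m - j)) /
       qpoch (x * of_real q powi (1 - int n) / y) (of_real q) (m - j) *
       (of_real q / y) ^ j)"
proof -
  define Q where "Q = complex_of_real q"
  have Q: "Q \<noteq> 0" using assms(1) by (simp add: Q_def)
  have nz: "qpoch Q Q k \<noteq> 0" for k
  proof -
    have "1 - Q * Q^i \<noteq> 0" for i
    proof
      assume "1 - Q * Q^i = 0"
      then have "complex_of_real (q^Suc i) = 1" by (simp add: Q_def)
      then have "q^Suc i = 1" using of_real_eq_1_iff by blast
      moreover have "q^Suc i < 1" using assms(1,2) by (rule power_Suc_less_one)
      ultimately show False by simp
    qed
    then show ?thesis unfolding qpoch_def by (simp add: prod_zero_iff)
  qed
  have p1: "Q powi (- int n) = inverse (Q^n)" by (simp add: power_int_minus)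
  have p2: "Q powi (1 - int n) = Q / Q^n" using Q by (simp add: power_int_diff)
  define P where "P = x ^ n * qpoch (y / x) Q n / qpoch y Q n"
  define T where "T M = qpoch (Q/Q^n/y) Q M * qpoch (Q*x/y) Q M / qpoch (x*(Q/Q^n)/y) Q M" for M
  define f where "f k = qpoch (inverse (Q^n)) Q k * qpoch x Q k / qpoch y Q k * (Q ^ (1 + m)) ^ k / qpoch Q Q k" for k
  have "phi21 (inverse (Q^n)) x y Q (Q ^ (1 + m)) = suminf f"
    unfolding phi21_def f_def ..
  also have "\<dots> = (\<Sum>k\<le>n. f k)"
    by (rule suminf_finite) (auto simp: f_def qpoch_vanish[OF Q])
  also have "\<dots> = (\<Sum>k\<le>n. alpha Q n k * qpoch x Q k / qpoch y Q k * (Q^k)^m)"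
    by (intro sum.cong refl) (simp add: f_def alpha_def power_add power_mult_distrib power_mult[symmetric] mult.commute[of m] mult_ac)
  also have "\<dots> = (\<Sum>k\<le>n. \<Sum>j\<le>m. G Q m j * (Q/y)^j * (alpha Q n k * qpoch x Q k / qpoch y Q k * (\<Prod>i<m-j. Q^k - Q/y*Q^i)))"
    by (subst GR[OF nz, where t="Q/y"]) (simp add: sum_distrib_left mult_ac)
  also have "\<dots> = (\<Sum>j\<le>m. G Q m j * (Q/y)^j * (\<Sum>k\<le>n. alpha Q n k * qpoch x Q k / qpoch y Q k * (\<Prod>i<m-j. Q^k - Q/y*Q^i)))"
    by (subst sum.swap) (simp add: sum_distrib_left)
  also have "\<dots> = (\<Sum>j\<le>m. qbinom Q m j * (Q/y)^j * (P * T (m-j)))"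
  proof (intro sum.cong refl)
    fix j assume j: "j \<in> {..m}"
    have cM: "qpoch (x*(Q/Q^n)/y) Q (m-j) \<noteq> 0" using assms(6) j p2 by (auto simp: Q_def)
    show "G Q m j * (Q/y)^j * (\<Sum>k\<le>n. alpha Q n k * qpoch x Q k / qpoch y Q k * (\<Prod>i<m-j. Q^k - Q/y*Q^i))
       = qbinom Q m j * (Q/y)^j * (P * T (m-j))"
      unfolding S1[OF Q nz assms(3,4) assms(5)[folded Q_def] cM] using j
      by (simp add: G_def P_def T_def)
  qed
  also have "\<dots> = P * (\<Sum>j\<le>m. qbinom Q m j * (qpoch (Q/Q^n/y) Q (m-j) * qpoch (Q*x/y) Q (m-j)) /
       qpoch (x*(Q/Q^n)/y) Q (m-j) * (Q/y)^j)"
    unfolding sum_distrib_left T_def by (intro sum.cong refl) (simp add: mult_ac)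
  finally have R: "phi21 (inverse (Q^n)) x y Q (Q ^ (1 + m)) = P * (\<Sum>j\<le>m. qbinom Q m j * (qpoch (Q/Q^n/y) Q (m-j) * qpoch (Q*x/y) Q (m-j)) /
       qpoch (x*(Q/Q^n)/y) Q (m-j) * (Q/y)^j)" .
  show ?thesis unfolding Q_def[symmetric] p1 p2 using R unfolding P_def .
qed

end
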